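(* Let $\beta\in(0,\tfrac12)$ and let $u:\mathbb{T}_m\to\mathbb{R}$ be an eigenfunction associated with $\lambda_1(\beta)$ such that $u(\emptyset)=1$, $u$ is constant on each level and strictly decreasing with respect to the level. Writing $u_k$ for the common value of $u$ on level $k$, we have $$\liminf_{k\to\infty}\frac{u_k-u_{k+1}}{p_\beta^k}\ge\lambda_1(\beta).$$
   Context: Tree: for an integer $m\ge2$, $\mathbb{T}_m$ has vertices the root $\emptyset$ and all finite sequences $(\emptyset,a_1,\dots,a_k)$, $a_i\in\{0,\dots,m-1\}$; $|x|$ is the level, successors of $x$ are $(x,i)$, $\hat x$ is the immediate predecessor of $x\ne\emptyset$. A branch is an infinite sequence $(x_n)_{n\ge0}$ with $x_0=\emptyset$, $x_{n+1}$ a successor of $x_n$; $\lim_{x\to y}u(x)=\lim_n u(x_n)$ for a branch $y=(x_n)$. Operator: $p_\beta=\beta/(1-\beta)$ for $\beta\in(0,1)$. $\Delta_\beta u(\emptyset)=\frac1m\sum_{i=0}^{m-1}u(\emptyset,i)-u(\emptyset)$ and, for $x\ne\emptyset$, $\Delta_\beta u(x)=\big(\beta u(\hat x)+\frac{1-\beta}{m}\sum_{i=0}^{m-1}u(x,i)-u(x)\big)p_\beta^{-|x|}$. Eigenfunction for $\lambda$: a bounded $u\not\equiv0$ with $-\Delta_\beta u=\lambda u$ on $\mathbb{T}_m$ and $\lim_{x\to y}u(x)=0$ for every branch $y$. $\mathcal{A}_\beta=\{\lambda>0:\exists v:\mathbb{T}_m\to\mathbb{R}\text{ and constants }0<c<C\text{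 with } c<v<C \text{ and } \Delta_\beta v+\lambda v\le0 \text{ on }\mathbb{T}_m\}$, $\lambda_1(\beta)=\sup\mathcal{A}_\beta$. *)

theory Defs
  imports "HOL-Analysis.Analysis"
begin

text \<open>Vertices of the m-ary tree: the root is the empty list, the vertex
  (root, a1, ..., ak) is the list [a1, ..., ak] with all ai < m.
  Successors of x are x @ [i], the predecessor is butlast x, the level is length x.\<close>

definition tree :: "nat \<Rightarrow> nat list set" where
  "tree m = {xs. \<forall>a\<in>set xs. a < m}"

definition pb :: "real \<Rightarrow> real" where
  "pb \<beta> = \<beta> / (1 - \<beta>)"

definition Lap :: "nat \<Rightarrow> real \<Rightarrow> (nat list \<Rightarrow> real) \<Rightarrow> nat list \<Rightarrow> real" where
  "Lap m \<beta> u x =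
     (if x = [] then (1 / real m) * (\<Sum>i<m. u [i]) - u []
      else (\<beta> * u (butlast x) + ((1 - \<beta>) / real m) * (\<Sum>i<m. u (x @ [i])) - u x)
             / (pb \<beta>) ^ length x)"

definition is_branch :: "nat \<Rightarrow> (nat \<Rightarrow> nat list) \<Rightarrow> bool" where
  "is_branch m y \<longleftrightarrow> y 0 = [] \<and> (\<forall>n. \<exists>i<m. y (Suc n) = y n @ [i])"

definition eigenfunction :: "nat \<Rightarrow> real \<Rightarrow> real \<Rightarrow> (nat list \<Rightarrow> real) \<Rightarrow> bool" where
  "eigenfunction m \<beta> lam u \<longleftrightarrow>
     (\<exists>B. \<forall>x\<in>tree m. \<bar>u x\<bar> \<le> B) \<and>
     (\<exists>x\<in>tree m. u x \<noteq> 0) \<and>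
     (\<forall>x\<in>tree m. - Lap m \<beta> u x = lam * u x) \<and>
     (\<forall>y. is_branch m y \<longrightarrow> ((\<lambda>n. u (y n)) \<longlongrightarrow> 0) sequentially)"

definition A_set :: "nat \<Rightarrow> real \<Rightarrow> real set" where
  "A_set m \<beta> = {lam. lam > 0 \<and> (\<exists>v c C. 0 < c \<and> c < C \<and>
      (\<forall>x\<in>tree m. c < v x \<and> v x < C \<and> Lap m \<beta> v x + lam * v x \<le> 0))}"

definition lambda1 :: "nat \<Rightarrow> real \<Rightarrow> real" where
  "lambda1 m \<beta> = Sup (A_set m \<beta>)"

end

theory Submission
  imports Defs
begin

theorem lemma5p10:
  fixes m :: nat and \<beta> :: real and u :: "nat list \<Rightarrow> real" and uk :: "nat \<Rightarrow> real"
  assumes "m \<ge> 2"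
    and "0 < \<beta>" and "\<beta> < 1/2"
    and "eigenfunction m \<beta> (lambda1 m \<beta>) u"
    and "u [] = 1"
    and "\<forall>x\<in>tree m. u x = uk (length x)"
    and "\<forall>k. uk (Suc k) < uk k"
  shows "Liminf sequentially (\<lambda>k. ereal ((uk k - uk (Suc k)) / (pb \<beta>) ^ k))
           \<ge> ereal (lambda1 m \<beta>)"
proof -
  define lam where "lam = lambda1 m \<beta>"
  define p where "p = pb \<beta>"
  have p0: "p > 0" using assms(2,3) by (simp add: p_def pb_def)
  have m0: "real m > 0" using assms(1) by simp
  have rt: "replicate k 0 \<in> tree m" for k using assms(1) by (simp add: tree_def)
  have rti: "replicate k 0 @ [i] \<in> tree m" if "i < m" for k i
    using assms(1) that by (auto simp: tree_def)
  have ur: "u (replicate k 0) = uk k" for k using assms(6) rt by simp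
  have uri: "u (replicate k 0 @ [i]) = uk (Suc k)" if "i < m" for k i
    using assms(6) rti[OF that] by simp
  have eq: "\<forall>x\<in>tree m. - Lap m \<beta> u x = lam * u x"
    using assms(4) unfolding eigenfunction_def lam_def by blast
  have br: "is_branch m (\<lambda>n. replicate n 0)"
    unfolding is_branch_def
  proof (intro conjI allI)
    fix n :: nat
    have "replicate (Suc n) (0::nat) = replicate n 0 @ [0]" by (simp add: replicate_append_same)
    moreover have "(0::nat) < m" using assms(1) by simp
    ultimately show "\<exists>i<m. replicate (Suc n) 0 = replicate n 0 @ [i]" by blast
  qed simp
  have lim: "uk \<longlonglongrightarrow> 0"
    using assms(4) br ur unfolding eigenfunction_def by auto
  have dec: "decseq uk" using assms(7) by (simp add: decseq_Suc_iff less_imp_le)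
  have ukpos: "uk k \<ge> 0" for k using decseq_ge[OF dec lim] by simp
  have sum_i: "(\<Sum>i<m. u (replicate k 0 @ [i])) = real m * uk (Suc k)" for k
    using uri by simp
  have root: "uk 0 - uk 1 = lam"
  proof -
    have "- Lap m \<beta> u [] = lam * u []" using eq by (simp add: tree_def)
    moreover have "(\<Sum>i<m. u [i]) = real m * uk 1" using sum_i[of 0] by simp
    ultimately show ?thesis using m0 assms(5) ur[of 0] by (simp add: Lap_def)
  qed
  have lev: "\<beta> * uk k + (1 - \<beta>) * uk (Suc (Suc k)) - uk (Suc k) = - lam * p ^ Suc k * uk (Suc k)" for k
  proof -
    let ?x = "replicate (Suc k) 0"
    have "- Lap m \<beta> u ?x = lam * u ?x" using eq rt by blast
    moreover have "u (butlast ?x) = uk k" using ur[of k] by (metis butlast_snoc replicate_append_same replicate_Suc)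
    moreover have "(\<Sum>i<m. u (?x @ [i])) = real m * uk (Suc (Suc k))" using sum_i[of "Suc k"] by (simp del: replicate_Suc)
    ultimately have "- ((\<beta> * uk k + (1 - \<beta>) * uk (Suc (Suc k)) - uk (Suc k)) / p ^ Suc k) = lam * uk (Suc k)"
      using ur[of k] ur[of "Suc k"] m0 by (simp del: replicate_Suc add: Lap_def p_def)
    then show ?thesis using m0 p0 by (simp add: field_simps)
  qed
  have rec: "(uk k - uk (Suc k)) / p ^ k = lam * (1 + (\<Sum>j\<in>{1..k}. uk j) / (1 - \<beta>))" for k
  proof (induction k)
    case 0 then show ?case using root by simp
  next
    case (Suc k)
    have b1: "1 - \<beta> > 0" using assms(3) by simp
    have pe: "p * (1 - \<beta>) = \<beta>" using b1 by (simp add: p_def pb_def)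
    define S where "S = lam * (1 + (\<Sum>j\<in>{1..k}. uk j) / (1 - \<beta>))"
    define q where "q = 1 - \<beta>"
    have q0: "q > 0" using b1 q_def by simp
    have dk: "uk k - uk (Suc k) = p ^ k * S"
      using Suc p0 unfolding S_def by (simp add: divide_simps)
    have "q * (uk (Suc k) - uk (Suc (Suc k))) = \<beta> * (uk k - uk (Suc k)) + lam * p ^ Suc k * uk (Suc k)"
      using lev[of k] unfolding q_def by (simp add: algebra_simps)
    also have "\<dots> = q * (p ^ Suc k * S) + q * (p ^ Suc k * (lam * uk (Suc k) / q))"
      using dk pe q0 unfolding q_def[symmetric] by (simp add: field_simps)
    finally have "q * (uk (Suc k) - uk (Suc (Suc k))) = q * (p ^ Suc k * (S + lam * uk (Suc k) / q))"
      by (simp add: algebra_simps)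
    then have d1: "uk (Suc k) - uk (Suc (Suc k)) = p ^ Suc k * (S + lam * uk (Suc k) / q)"
      using q0 by simp
    have sm: "(\<Sum>j\<in>{1..Suc k}. uk j) = (\<Sum>j\<in>{1..k}. uk j) + uk (Suc k)" by simp
    have "S + lam * uk (Suc k) / q = lam * (1 + (\<Sum>j\<in>{1..Suc k}. uk j) / q)"
      unfolding sm S_def q_def[symmetric] by (simp add: add_divide_distrib ring_distribs)
    then show ?case using d1 p0 unfolding q_def by simp
  qed
  have lam0: "lam > 0" using root assms(7) by force
  have ge: "lam \<le> (uk k - uk (Suc k)) / p ^ k" for k
  proof -
    have "(\<Sum>j\<in>{1..k}. uk j) / (1 - \<beta>) \<ge> 0" using ukpos assms(3) by (simp add: sum_nonneg)
    then show ?thesis unfolding rec using lam0 by (simp add: mult_le_cancel_left1)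
  qed
  show ?thesis unfolding lam_def[symmetric] p_def[symmetric]
    by (rule Liminf_bounded) (use ge in auto)
qed

end
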